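(* Let $n\ge 2$ and let $Y\subseteq\mathbb{S}^{n-1}$ be a finite set with $I(Y)=\{\pm\alpha,\pm\beta\}$, where $\alpha,\beta$ are real numbers with $0<\beta<\alpha<1$ (so $Y$ is a spherical $4$-distance set). Let $X'=Y\cup(-Y)$. (1) If $|Y|\ge 2\binom{n+1}{2}$, then the two numbers \[k_1=\frac{1-\alpha^2}{\beta^2-\alpha^2},\qquad k_2=\frac{1-\beta^2}{\alpha^2-\beta^2}\] are integers. (2) If $|Y|\ge 2\binom{n+2}{3}+1$, then the two numbers \[k_1=\frac{1-\alpha^2}{\beta(\beta^2-\alpha^2)},\qquad k_2=\frac{1-\beta^2}{\alpha(\alpha^2-\beta^2)}\] are integers.
   Context: $\mathbb{S}^{n-1}$ is the unit sphere in $\mathbb{R}^n$. For $Y\subseteq\mathbb{R}^n$, $I(Y)=\{\mathbf{x}\cdot\mathbf{y}:\mathbf{x},\mathbf{y}\in Y,\ \mathbf{x}\neq\mathbf{y}\}$ (standard inner product). A spherical $s$-distance set is a finite subset $Y$ of $\mathbb{S}^{n-1}$ with $|I(Y)|=s$. *)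

theory Defs
  imports "HOL-Analysis.Analysis"
begin

definition inner_products :: "('a::real_inner) set \<Rightarrow> real set" where
  "inner_products Y = {x \<bullet> y | x y. x \<in> Y \<and> y \<in> Y \<and> x \<noteq> y}"

end

theory Submission imports Defs Jordan_Normal_Form.Jordan_Normal_Form_Uniqueness Jordan_Normal_Form.Jordan_Normal_Form_Existence "HOL-Computational_Algebra.Field_as_Ring"
begin

interpretation rp: map_poly_idom_hom "of_rat :: rat \<Rightarrow> complex" ..
interpretation rg: field_hom' "of_rat :: rat \<Rightarrow> complex" ..

abbreviation "cR \<equiv> (map_poly (of_rat :: rat \<Rightarrow> complex))"

lemma no_common_root:
  fixes p q :: "rat poly"
  assumes "coprime p q" "poly (cR p) z = 0" "poly (cR q) z = 0"
  shows False
proof -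
  have g: "gcd p q = 1" using assms(1) by simp
  have "gcd (cR p) (cR q) = 1"
    using rg.map_poly_gcd[of p q] g by simp
  moreover have "[:-z,1:] dvd cR p" "[:-z,1:] dvd cR q" using assms(2,3)
    by (simp_all add: poly_eq_0_iff_dvd)
  ultimately have "[:-z,1:] dvd 1" by (metis gcd_greatest)
  thus False by (simp add: is_unit_iff_degree)
qed

lemma prime_sep:
  fixes p :: "rat poly"
  assumes "prime_elem p"
  shows "coprime p (pderiv p)"
proof -
  have p0: "p \<noteq> 0" and pu: "\<not> is_unit p" using assms by (auto simp: prime_elem_def)
  have dp: "degree p \<noteq> 0" using p0 pu by (simp add: is_unit_iff_degree)
  hence pd0: "pderiv p \<noteq> 0" by (simp add: pderiv_eq_0_iff)
  have "\<not> p dvd pderiv p"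
  proof
    assume "p dvd pderiv p"
    from dvd_imp_degree_le[OF this pd0] have "degree p \<le> degree (pderiv p)" .
    with dp show False by (simp add: degree_pderiv)
  qed
  thus ?thesis using prime_elem_imp_coprime[OF assms] by simp
qed

lemma order_power_gen:
  fixes p :: "'a::idom poly"
  assumes "p \<noteq> 0"
  shows "Polynomial.order a (p ^ n) = n * Polynomial.order a p"
  using assms by (induction n) (auto simp: order_mult)

lemma complex_of_rat_real: "(of_rat q :: complex) = complex_of_real (of_rat q)"
  by (cases q) (simp add: of_rat_rat)

lemma alg_main:
  fixes c :: "int poly" and \<mu> :: real and m :: nat
  assumes c0: "c \<noteq> 0"
    and ord: "Polynomial.order (complex_of_real \<mu>) (map_poly of_int c) \<ge> m"
    and m0: "m > 0"
    and deg: "degree c \<le> 2 * m"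
  shows "\<mu> \<in> \<rat> \<or> (\<exists>b e. b \<in> \<rat> \<and> e \<in> \<rat> \<and> \<mu>^2 + b * \<mu> + e = 0 \<and>
           (\<forall>z::complex. poly (map_poly of_int c) z = 0 \<longrightarrow> z^2 + of_real b * z + of_real e = 0)
           \<and> degree c = 2 * m)"
proof -
  define cq where "cq = map_poly (of_int :: int \<Rightarrow> rat) c"
  define z0 where "z0 = complex_of_real \<mu>"
  have cqc: "cR cq = map_poly of_int c" unfolding cq_def
    by (subst map_poly_map_poly, auto simp: o_def)
  have cq0: "cq \<noteq> 0" using c0 unfolding cq_def by simp
  have degcq: "degree cq = degree c" unfolding cq_def by simp
  have root: "poly (cR cq) z0 = 0"
    using ord m0 c0 unfolding cqc z0_def order_root by auto
  have dec: "cq = unit_factor cq * prod_mset (prime_factorization cq)"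
    by (rule prime_decomposition[symmetric])
  have "cR cq = cR (unit_factor cq) * prod_mset (image_mset cR (prime_factorization cq))"
    by (subst (1) dec) (simp only: rp.hom_mult rp.hom_prod_mset)
  hence "poly (cR cq) z0 = poly (cR (unit_factor cq)) z0 * (\<Prod>p\<in>#prime_factorization cq. poly (cR p) z0)"
    by (simp only: poly_mult poly_prod_mset)
  moreover have "poly (cR (unit_factor cq)) z0 \<noteq> 0"
  proof -
    have "is_unit (unit_factor cq)" using cq0 by (rule unit_factor_is_unit)
    then obtain a where "unit_factor cq = [:a:]" "a \<noteq> 0"
      by (metis is_unit_polyE' monom_0)
    thus ?thesis by simp
  qed
  ultimately obtain p where pin: "p \<in># prime_factorization cq" and pr: "poly (cR p) z0 = 0"
    using root by (auto simp: prod_mset_zero_iff)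
  have pp: "prime_elem p" using in_prime_factors_imp_prime[OF pin] by (simp add: prime_def)
  have p0: "p \<noteq> 0" and pu: "\<not> is_unit p" using pp by (auto simp: prime_elem_def)
  have degp: "degree p \<ge> 1" using p0 pu is_unit_iff_degree by fastforce
  obtain r where cqd: "cq = p ^ multiplicity p cq * r" and npr: "\<not> p dvd r"
    using multiplicity_decompose'[OF cq0 pu] by metis
  define j where "j = multiplicity p cq"
  have r0: "r \<noteq> 0" using npr by auto
  have rnz: "poly (cR r) z0 \<noteq> 0"
    using no_common_root[OF prime_elem_imp_coprime[OF pp npr] pr] by auto
  have cpp: "cR p \<noteq> 0" using p0 by simp
  have ordp1: "Polynomial.order z0 (cR p) = 1"
  proof -
    have "Polynomial.order z0 (cR p) \<noteq> 0" using pr cpp order_root by blast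
    moreover have "Polynomial.order z0 (cR p) \<le> 1"
    proof (rule ccontr)
      assume "\<not> ?thesis"
      hence "Polynomial.order z0 (cR p) = Suc (Polynomial.order z0 (pderiv (cR p)))"
        "Polynomial.order z0 (cR p) \<ge> 2"
        using order_pderiv[OF cpp pr] by auto
      hence "Polynomial.order z0 (pderiv (cR p)) \<noteq> 0" by auto
      hence "poly (pderiv (cR p)) z0 = 0" using order_root by blast
      hence "poly (cR (pderiv p)) z0 = 0" by (simp add: of_rat_hom.map_poly_pderiv)
      thus False using no_common_root[OF prime_sep[OF pp] pr] by auto
    qed
    ultimately show ?thesis by linarith
  qed
  have ccq: "cR cq = (cR p) ^ j * cR r"
    by (subst cqd, simp add: j_def rp.hom_mult rp.hom_power)
  have "Polynomial.order z0 (cR cq) = j * Polynomial.order z0 (cR p) + Polynomial.order z0 (cR r)"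
    unfolding ccq using cpp r0
    by (simp add: order_mult order_power_gen)
  also have "\<dots> = j" using ordp1 rnz order_root by auto
  finally have jm: "j \<ge> m" using ord unfolding cqc z0_def by simp
  have degcq2: "degree cq = j * degree p + degree r"
    using cqd p0 r0 by (simp add: j_def[symmetric] degree_mult_eq degree_power_eq)
  show ?thesis
  proof (cases "degree p = 1")
    case True
    define a where "a = coeff p 0"
    define b where "b = coeff p 1"
    have pab: "p = [:a,b:]" unfolding a_def b_def using True
      by (intro poly_eqI) (auto simp: coeff_pCons coeff_eq_0 split: nat.splits)
    have b0: "b \<noteq> 0" unfolding b_def using True p0 by (metis leading_coeff_0_iff)
    have eq1: "of_rat b * z0 = - of_rat a" using pr pab
      by (simp add: of_rat_hom.map_poly_pCons_hom eq_neg_iff_add_eq_0 algebra_simps)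
    have "z0 = (of_rat b * z0) / of_rat b" using b0 by simp
    also have "\<dots> = - of_rat a / of_rat b" using eq1 by simp
    also have "\<dots> = of_rat (- a / b)" by (simp add: of_rat_divide of_rat_minus)
    finally have "z0 = of_rat (- a / b)" .
    hence "complex_of_real \<mu> = complex_of_real (of_rat (- a / b))" unfolding z0_def
      by (simp add: complex_of_rat_real)
    hence "\<mu> = of_rat (- a / b)" by (simp only: of_real_eq_iff)
    thus ?thesis by simp
  next
    case False
    with degp have dp2: "degree p \<ge> 2" by simp
    have "2 * j \<le> j * degree p" using dp2 by simp
    also have "\<dots> \<le> degree cq" using degcq2 by simp
    finally have "2 * j \<le> degree c" using degcq by simp
    with jm deg have eqs: "degree c = 2 * m" "j = m" by auto
    have h1: "m * 2 \<le> m * degree p" using dp2 by simp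
    have h2: "degree c = degree r + m * degree p" using degcq2 degcq eqs(2) by simp
    from h1 h2 eqs(1) have dr: "degree r = 0" by linarith
    from h1 h2 eqs(1) have h3: "m * degree p = m * 2" by linarith
    from h3 m0 have dp: "degree p = 2" by simp
    define p0' where "p0' = coeff p 0"
    define p1 where "p1 = coeff p 1"
    define p2 where "p2 = coeff p 2"
    have pab: "p = [:p0',p1,p2:]" unfolding p0'_def p1_def p2_def using dp
      by (intro poly_eqI) (auto simp: coeff_pCons coeff_eq_0 numeral_2_eq_2 split: nat.splits)
    have p20: "p2 \<noteq> 0" unfolding p2_def using dp p0 by (metis leading_coeff_0_iff)
    obtain r0' where rr: "r = [:r0':]" using dr by (metis degree_eq_zeroE)
    have r00: "r0' \<noteq> 0" using r0 rr by simp
    define b where "b = (of_rat (p1/p2) :: real)"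
    define e where "e = (of_rat (p0'/p2) :: real)"
    have key: "z^2 + of_real b * z + of_real e = 0" if "poly (cR p) z = 0" for z
    proof -
      have "of_rat p0' + z * (of_rat p1 + z * of_rat p2) = 0"
        using that pab by (simp add: of_rat_hom.map_poly_pCons_hom)
      hence "(of_rat p0' + z * (of_rat p1 + z * of_rat p2)) / of_rat p2 = 0" by simp
      moreover have "(of_rat p0' + z * (of_rat p1 + z * of_rat p2)) / of_rat p2 = 
          z^2 + of_rat (p1/p2) * z + of_rat (p0'/p2)"
        using p20 by (simp add: of_rat_divide field_simps power2_eq_square)
      ultimately have "z^2 + of_rat (p1/p2) * z + of_rat (p0'/p2) = (0::complex)" by simp
      thus ?thesis unfolding b_def e_def by (simp add: complex_of_rat_real)
    qed
    have "\<forall>z::complex. poly (map_poly of_int c) z = 0 \<longrightarrow> z^2 + of_real b * z + of_real e = 0"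
    proof (intro allI impI)
      fix z :: complex assume "poly (map_poly of_int c) z = 0"
      hence "poly (cR cq) z = 0" using cqc by simp
      hence "poly (cR p) z ^ j * poly (cR r) z = 0" unfolding ccq by simp
      hence "poly (cR p) z = 0" using rr r00 by simp
      thus "z^2 + of_real b * z + of_real e = 0" by (rule key)
    qed
    moreover have "\<mu>^2 + b * \<mu> + e = 0"
    proof -
      have "complex_of_real (\<mu>^2 + b * \<mu> + e) = z0^2 + of_real b * z0 + of_real e"
        unfolding z0_def by simp
      also have "\<dots> = 0" using key[OF pr] .
      finally show ?thesis by (simp only: of_real_eq_0_iff)
    qed
    moreover have "b \<in> \<rat>" "e \<in> \<rat>" unfolding b_def e_def by auto
    ultimately show ?thesis using eqs by blast
  qed
qed


lemma kernel_dim_mult_ge: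
  fixes P Q :: "'a::field mat"
  assumes P: "P \<in> carrier_mat N D" and Q: "Q \<in> carrier_mat D N"
  shows "kernel_dim (P * Q) \<ge> N - D"
proof -
  have PQ: "P * Q \<in> carrier_mat N N" using P Q by auto
  interpret KQ: kernel D N Q by (unfold_locales, rule Q)
  interpret KB: kernel N N "P * Q" by (unfold_locales, rule PQ)
  obtain C where gj: "gauss_jordan_single Q = C" by auto
  note g = gauss_jordan_single[OF Q gj]
  from g(3) obtain f where piv: "pivot_fun C f (dim_col C)" unfolding row_echelon_form_def by auto
  have Cc: "C \<in> carrier_mat D N" by (rule g(2))
  hence piv': "pivot_fun C f N" using piv by simp
  have "length (pivot_positions C) = card {i. i < D \<and> row C i \<noteq> 0\<^sub>v N}"
    by (rule pivot_positions(4)[OF Cc piv'])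
  also have "\<dots> \<le> card {..<D}" by (rule card_mono, auto)
  finally have lp: "length (pivot_positions C) \<le> D" by simp
  have kq: "kernel_dim Q = N - length (pivot_positions C)"
    unfolding kernel_dim_code gj using Q by simp
  from kernel_basis_exists[OF Q] obtain B where fB: "finite B" and bB: "KQ.basis B" by auto
  have cardB: "card B = kernel_dim Q" using KQ.Ker.dim_basis[OF fB bB] by simp
  have BQ: "B \<subseteq> mat_kernel Q" and liQ: "KQ.lin_indpt B"
    using bB unfolding KQ.Ker.basis_def by auto
  have sub: "mat_kernel Q \<subseteq> mat_kernel (P * Q)" by (rule mat_kernel_mult_subset[OF Q P])
  have liN: "\<not> KQ.NC.lin_dep B" using liQ KQ.lindep_same[OF BQ] by simp
  have liB: "KB.lin_indpt B" using liN KB.lindep_same[of B] BQ sub by auto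
  from kernel_basis_exists[OF PQ] obtain B2 where fB2: "finite B2" and bB2: "KB.basis B2" by auto
  have fd: "KB.Ker.fin_dim" using fB2 bB2 unfolding KB.Ker.fin_dim_def KB.Ker.basis_def by auto
  have "card B \<le> KB.dim" using KB.Ker.li_le_dim(2)[OF fd _ liB] BQ sub by auto
  hence "kernel_dim Q \<le> kernel_dim (P * Q)" using cardB by simp
  with kq lp show ?thesis by linarith
qed

lemma geo_le_alg:
  fixes A :: "complex mat"
  assumes A: "A \<in> carrier_mat n n"
  shows "kernel_dim (char_matrix A e) \<le> Polynomial.order e (char_poly A)"
proof -
  obtain as where "char_poly A = (\<Prod>a\<leftarrow>as. [:- a, 1:])" using char_poly_factorized[OF A] by auto
  from jordan_nf_exists[OF A this] obtain n_as where jnf: "jordan_nf A n_as" by auto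
  have cm: "char_matrix A e \<in> carrier_mat n n" using A by simp
  have "kernel_dim (char_matrix A e) = dim_gen_eigenspace A e 1"
    unfolding dim_gen_eigenspace_def using cm by simp
  also have "\<dots> = (\<Sum> n \<leftarrow> map fst [(n, e')\<leftarrow>n_as . e' = e]. min 1 n)"
    by (rule dim_gen_eigenspace[OF jnf])
  also have "\<dots> \<le> sum_list (map fst (filter (\<lambda> na. snd na = e) n_as))"
    by (induction n_as) auto
  also have "\<dots> = Polynomial.order e (char_poly A)"
    by (rule jordan_nf_order[OF jnf, symmetric])
  finally show ?thesis .
qed


lemma mult_entry:
  fixes A B :: "'a::comm_ring_1 mat"
  assumes "A \<in> carrier_mat n n" "B \<in> carrier_mat n n" "i < n" "j < n"
  shows "(A * B) $$ (i,j) = (\<Sum>l<n. A $$ (i,l) * B $$ (l,j))"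
  using assms by (simp add: scalar_prod_def lessThan_atLeast0)

lemma ut_mult:
  fixes U1 U2 :: "'a::comm_ring_1 mat"
  assumes U1: "U1 \<in> carrier_mat n n" and U2: "U2 \<in> carrier_mat n n"
    and t1: "upper_triangular U1" and t2: "upper_triangular U2"
  shows "upper_triangular (U1 * U2)" "\<And>i. i < n \<Longrightarrow> (U1 * U2) $$ (i,i) = U1 $$ (i,i) * U2 $$ (i,i)"
proof -
  have z1: "U1 $$ (i,l) = 0" if "l < i" "i < n" for i l using t1 U1 that unfolding upper_triangular_def by auto
  have z2: "U2 $$ (i,l) = 0" if "l < i" "i < n" for i l using t2 U2 that unfolding upper_triangular_def by auto
  show "upper_triangular (U1 * U2)" unfolding upper_triangular_def
  proof (intro allI impI)
    fix i k assume i: "i < dim_row (U1 * U2)" and k: "k < i"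
    hence i': "i < n" using U1 by simp
    have "(U1 * U2) $$ (i,k) = (\<Sum>l<n. U1 $$ (i,l) * U2 $$ (l,k))"
      using mult_entry[OF U1 U2 i'] k i' by simp
    also have "\<dots> = 0"
    proof (rule sum.neutral, intro ballI)
      fix l assume l: "l \<in> {..<n}"
      show "U1 $$ (i,l) * U2 $$ (l,k) = 0"
      proof (cases "l < i")
        case True thus ?thesis using z1[OF True i'] by simp
      next
        case False thus ?thesis using z2[of k l] k l by simp
      qed
    qed
    finally show "(U1 * U2) $$ (i,k) = 0" .
  qed
  fix i assume i: "i < n"
  have "(U1 * U2) $$ (i,i) = (\<Sum>l<n. U1 $$ (i,l) * U2 $$ (l,i))"
    using mult_entry[OF U1 U2 i i] .
  also have "\<dots> = (\<Sum>l<n. if l = i then U1 $$ (i,i) * U2 $$ (i,i) else 0)"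
  proof (rule sum.cong[OF refl])
    fix l assume l: "l \<in> {..<n}"
    show "U1 $$ (i,l) * U2 $$ (l,i) = (if l = i then U1 $$ (i,i) * U2 $$ (i,i) else 0)"
    proof (cases "l < i")
      case True thus ?thesis using z1[OF True i] by simp
    next
      case False thus ?thesis using z2[of i l] l by (cases "l = i") auto
    qed
  qed
  also have "\<dots> = U1 $$ (i,i) * U2 $$ (i,i)" using i by simp
  finally show "(U1 * U2) $$ (i,i) = U1 $$ (i,i) * U2 $$ (i,i)" .
qed

definition mtr :: "'a::comm_ring_1 mat \<Rightarrow> 'a" where
  "mtr M = (\<Sum>i<dim_row M. M $$ (i,i))"

lemma mtr_comm:
  fixes A B :: "'a::comm_ring_1 mat"
  assumes "A \<in> carrier_mat n m" "B \<in> carrier_mat m n"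
  shows "mtr (A * B) = mtr (B * A)"
proof -
  have "mtr (A * B) = (\<Sum>i<n. \<Sum>k<m. A $$ (i,k) * B $$ (k,i))"
    unfolding mtr_def using assms by (simp add: scalar_prod_def lessThan_atLeast0)
  also have "\<dots> = (\<Sum>k<m. \<Sum>i<n. B $$ (k,i) * A $$ (i,k))"
    by (subst sum.swap) (simp add: mult.commute)
  also have "\<dots> = mtr (B * A)"
    unfolding mtr_def using assms by (simp add: scalar_prod_def lessThan_atLeast0)
  finally show ?thesis .
qed

lemma mtr_sim:
  fixes P Q W :: "'a::comm_ring_1 mat"
  assumes P: "P \<in> carrier_mat n n" and Q: "Q \<in> carrier_mat n n" and W: "W \<in> carrier_mat n n"
    and QP: "Q * P = 1\<^sub>m n"
  shows "mtr (P * W * Q) = mtr W"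
proof -
  have "mtr (P * W * Q) = mtr (P * (W * Q))" using P Q W by simp
  also have "\<dots> = mtr ((W * Q) * P)" by (rule mtr_comm[OF P], insert W Q, auto)
  also have "(W * Q) * P = W * (Q * P)" using P Q W by simp
  also have "\<dots> = W" using QP W by simp
  finally show ?thesis .
qed

lemma sim_mult:
  fixes P Q B1 B2 :: "'a::comm_ring_1 mat"
  assumes P: "P \<in> carrier_mat n n" and Q: "Q \<in> carrier_mat n n"
    and B1: "B1 \<in> carrier_mat n n" and B2: "B2 \<in> carrier_mat n n"
    and QP: "Q * P = 1\<^sub>m n"
  shows "(P * B1 * Q) * (P * B2 * Q) = P * (B1 * B2) * Q"
proof -
  have PB2Q: "P * (B2 * Q) \<in> carrier_mat n n" "B2 * Q \<in> carrier_mat n n" "B1 * Q \<in> carrier_mat n n"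
    using P Q B1 B2 by auto
  have e1: "P * B1 * Q = P * (B1 * Q)" using P Q B1 by simp
  have e2: "P * B2 * Q = P * (B2 * Q)" using P Q B2 by simp
  have "(P * (B1 * Q)) * (P * (B2 * Q)) = P * ((B1 * Q) * (P * (B2 * Q)))"
    by (rule assoc_mult_mat[OF P PB2Q(3) PB2Q(1)])
  also have "(B1 * Q) * (P * (B2 * Q)) = B1 * (Q * (P * (B2 * Q)))" by (rule assoc_mult_mat[OF B1 Q PB2Q(1)])
  also have "Q * (P * (B2 * Q)) = (Q * P) * (B2 * Q)" by (rule assoc_mult_mat[OF Q P PB2Q(2), symmetric])
  also have "\<dots> = B2 * Q" using QP left_mult_one_mat[OF PB2Q(2)] by simp
  also have "B1 * (B2 * Q) = (B1 * B2) * Q" by (rule assoc_mult_mat[OF B1 B2 Q, symmetric])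
  also have "P * ((B1 * B2) * Q) = P * (B1 * B2) * Q" 
    by (rule assoc_mult_mat[OF P mult_carrier_mat[OF B1 B2] Q, symmetric])
  finally show ?thesis using e1 e2 by simp
qed

lemma delta_sum:
  fixes x y :: "nat \<Rightarrow> 'a::comm_ring_1"
  assumes "i < n" "j < n"
  shows "(\<Sum>l<n. (x l - (if i = l then r1 else 0)) * (y l - (if l = j then r2 else 0)))
    = (\<Sum>l<n. x l * y l) - r2 * x j - r1 * y i + (if i = j then r1 * r2 else 0)"
proof -
  have "(\<Sum>l<n. (x l - (if i = l then r1 else 0)) * (y l - (if l = j then r2 else 0)))
    = (\<Sum>l<n. x l * y l - (if l = j then r2 * x l else 0) - (if i = l then r1 * y l else 0)
         + (if i = l then (if l = j then r1 * r2 else 0) else 0))"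
    by (rule sum.cong, auto simp: algebra_simps)
  also have "\<dots> = (\<Sum>l<n. x l * y l) - (\<Sum>l<n. if l = j then r2 * x l else 0)
     - (\<Sum>l<n. if i = l then r1 * y l else 0) + (\<Sum>l<n. if i = l then (if l = j then r1 * r2 else 0) else 0)"
    by (simp add: sum.distrib sum_subtractf)
  also have "\<dots> = (\<Sum>l<n. x l * y l) - r2 * x j - r1 * y i + (if i = j then r1 * r2 else 0)"
    using assms by simp
  finally show ?thesis .
qed

lemma quad_zero:
  fixes A :: "real mat" and b e :: real
  assumes A: "A \<in> carrier_mat n n" and sym: "\<And>i j. i < n \<Longrightarrow> j < n \<Longrightarrow> A $$ (i,j) = A $$ (j,i)"
    and roots: "\<And>z. poly (char_poly (map_mat complex_of_real A)) z = 0 \<Longrightarrow> z^2 + of_real b * z + of_real e = 0"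
    and i: "i < n" and j: "j < n"
  shows "(\<Sum>l<n. A $$ (i,l) * A $$ (l,j)) + b * A $$ (i,j) + (if i = j then e else 0) = 0"
proof -
  define Ac where "Ac = map_mat complex_of_real A"
  have Ac: "Ac \<in> carrier_mat n n" using A unfolding Ac_def by simp
  define z where "z = (\<lambda>i j. (\<Sum>l<n. A $$ (i,l) * A $$ (l,j)) + b * A $$ (i,j) + (if i = j then e else 0))"
  have zsym: "z k i = z i k" if "i < n" "k < n" for i k
    unfolding z_def using that sym by (auto intro!: sum.cong simp: mult.commute)
  obtain r1 r2 :: complex where r12: "r1 + r2 = - of_real b" "r1 * r2 = of_real e"
  proof -
    define d where "d = csqrt (of_real (b^2 - 4 * e))"
    have "d^2 = of_real (b^2 - 4*e)" unfolding d_def by simp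
    show ?thesis
      apply (rule that[of "(- of_real b + d)/2" "(- of_real b - d)/2"])
      using \<open>d^2 = _\<close> by (auto simp: field_simps power2_eq_square)
  qed
  obtain es where cp: "char_poly Ac = (\<Prod>a\<leftarrow>es. [:- a, 1:])" using char_poly_factorized[OF Ac] by auto
  define T where "T = schur_upper_triangular Ac es"
  note sch = schur_upper_triangular[OF Ac cp, folded T_def]
  have T: "T \<in> carrier_mat n n" and ut: "upper_triangular T" using sch by auto
  from sch(3) obtain P Q where wit: "similar_mat_wit Ac T P Q" unfolding similar_mat_def by auto
  from similar_mat_witD2[OF Ac wit] have P: "P \<in> carrier_mat n n" and Q: "Q \<in> carrier_mat n n"
    and QP: "Q * P = 1\<^sub>m n" by auto
  have diagroot: "(T $$ (k,k))^2 + of_real b * T $$ (k,k) + of_real e = 0" if k: "k < n" for k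
  proof (rule roots)
    have "char_poly Ac = char_poly T" by (rule char_poly_similar[OF sch(3)])
    also have "\<dots> = (\<Prod>a\<leftarrow>diag_mat T. [:- a, 1:])" by (rule char_poly_upper_triangular[OF T ut])
    finally have eq: "char_poly Ac = (\<Prod>a\<leftarrow>diag_mat T. [:- a, 1:])" .
    have mem: "T $$ (k,k) \<in> set (diag_mat T)" using k T unfolding diag_mat_def by auto
    show "poly (char_poly (map_mat complex_of_real A)) (T $$ (k,k)) = 0"
      unfolding Ac_def[symmetric] eq poly_prod_list using mem
      by (auto simp: prod_list_zero_iff)
  qed
  define C1 where "C1 = char_matrix T r1"
  define C2 where "C2 = char_matrix T r2"
  have C1: "C1 \<in> carrier_mat n n" and C2: "C2 \<in> carrier_mat n n" unfolding C1_def C2_def using T by auto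
  have C1e: "C1 $$ (k,l) = T $$ (k,l) - (if k = l then r1 else 0)" if "k < n" "l < n" for k l
    unfolding C1_def char_matrix_def using that T by auto
  have C2e: "C2 $$ (k,l) = T $$ (k,l) - (if k = l then r2 else 0)" if "k < n" "l < n" for k l
    unfolding C2_def char_matrix_def using that T by auto
  have utT: "T $$ (k,l) = 0" if "l < k" "k < n" for k l using ut T that unfolding upper_triangular_def by auto
  have ut1: "upper_triangular C1" unfolding upper_triangular_def using C1 C1e utT by auto
  have ut2: "upper_triangular C2" unfolding upper_triangular_def using C2 C2e utT by auto
  define X where "X = C1 * C2"
  have X: "X \<in> carrier_mat n n" unfolding X_def using C1 C2 by auto
  note uX = ut_mult[OF C1 C2 ut1 ut2, folded X_def]
  have Xd: "X $$ (k,k) = 0" if "k < n" for k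
  proof -
    have "X $$ (k,k) = (T $$ (k,k) - r1) * (T $$ (k,k) - r2)" using uX(2)[OF that] C1e C2e that by simp
    also have "\<dots> = (T $$ (k,k))^2 - (r1 + r2) * T $$ (k,k) + r1 * r2" by (simp add: algebra_simps power2_eq_square)
    also have "\<dots> = 0" using diagroot[OF that] r12 by simp
    finally show ?thesis .
  qed
  note uXX = ut_mult[OF X X uX(1) uX(1)]
  have trXX: "mtr (X * X) = 0" unfolding mtr_def using X uXX(2) Xd by simp
  have wit1: "char_matrix Ac r1 = P * C1 * Q"
    using similar_mat_wit_char_matrix[OF wit, of r1] unfolding similar_mat_wit_def C1_def Let_def by auto
  have wit2: "char_matrix Ac r2 = P * C2 * Q"
    using similar_mat_wit_char_matrix[OF wit, of r2] unfolding similar_mat_wit_def C2_def Let_def by auto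
  define Zc where "Zc = char_matrix Ac r1 * char_matrix Ac r2"
  have ZcX: "Zc = P * X * Q" unfolding Zc_def wit1 wit2 X_def by (rule sim_mult[OF P Q C1 C2 QP])
  have Zc: "Zc \<in> carrier_mat n n" unfolding Zc_def by (rule mult_carrier_mat[OF char_matrix_closed[OF Ac] char_matrix_closed[OF Ac]])
  have "Zc * Zc = P * (X * X) * Q" unfolding ZcX by (rule sim_mult[OF P Q X X QP])
  hence trZ: "mtr (Zc * Zc) = 0" using mtr_sim[OF P Q _ QP, of "X * X"] X trXX by auto
  have Zce: "Zc $$ (k,l) = of_real (z k l)" if k: "k < n" and l: "l < n" for k l
  proof -
    have "Zc $$ (k,l) = (\<Sum>m<n. (char_matrix Ac r1) $$ (k,m) * (char_matrix Ac r2) $$ (m,l))"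
      unfolding Zc_def by (rule mult_entry, insert Ac k l, auto)
    also have "\<dots> = (\<Sum>m<n. (of_real (A $$ (k,m)) - (if k = m then r1 else 0)) * 
         (of_real (A $$ (m,l)) - (if m = l then r2 else 0)))"
      by (rule sum.cong, insert Ac A k l, auto simp: char_matrix_def Ac_def)
    also have "\<dots> = (\<Sum>m<n. of_real (A $$ (k,m)) * of_real (A $$ (m,l))) - r2 * of_real (A $$ (k,l))
         - r1 * of_real (A $$ (k,l)) + (if k = l then r1 * r2 else 0)"
      by (rule delta_sum[OF k l])
    also have "\<dots> = (\<Sum>m<n. of_real (A $$ (k,m)) * of_real (A $$ (m,l))) - (r2 * of_real (A $$ (k,l))
         + r1 * of_real (A $$ (k,l))) + (if k = l then r1 * r2 else 0)"
      by (simp add: diff_diff_eq)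
    also have "r2 * of_real (A $$ (k,l)) + r1 * of_real (A $$ (k,l)) = - (of_real b * of_real (A $$ (k,l)))"
      by (metis r12(1) distrib_right add.commute mult_minus_left)
    also have "(\<Sum>m<n. of_real (A $$ (k,m)) * of_real (A $$ (m,l))) - - (of_real b * of_real (A $$ (k,l)))
       + (if k = l then r1 * r2 else 0) = of_real (z k l)"
      unfolding z_def by (cases "k = l", simp_all add: r12(2))
    finally show ?thesis .
  qed
  have "mtr (Zc * Zc) = (\<Sum>k<n. \<Sum>l<n. Zc $$ (k,l) * Zc $$ (l,k))"
    unfolding mtr_def using Zc by (simp add: scalar_prod_def lessThan_atLeast0)
  also have "\<dots> = of_real (\<Sum>k<n. \<Sum>l<n. (z k l)^2)"
    by (simp add: Zce zsym power2_eq_square)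
  finally have "(\<Sum>k<n. \<Sum>l<n. (z k l)^2) = 0" using trZ by (metis of_real_eq_0_iff)
  hence "(\<Sum>l<n. (z i l)^2) = 0" using i
    by (subst (asm) sum_nonneg_eq_0_iff) (auto intro: sum_nonneg)
  hence "(z i j)^2 = 0" using j by (subst (asm) sum_nonneg_eq_0_iff, auto)
  thus ?thesis unfolding z_def by simp
qed


lemma graph_root:
  fixes a :: "nat \<Rightarrow> nat \<Rightarrow> real" and b e :: real
  assumes n: "n > 0"
    and a01: "\<And>i j. i < n \<Longrightarrow> j < n \<Longrightarrow> a i j = 0 \<or> a i j = 1"
    and diag: "\<And>i. i < n \<Longrightarrow> a i i = 0"
    and sym: "\<And>i j. i < n \<Longrightarrow> j < n \<Longrightarrow> a i j = a j i"
    and Z: "\<And>i j. i < n \<Longrightarrow> j < n \<Longrightarrow> (\<Sum>l<n. a i l * a l j) + b * a i j + (if i = j then e else 0) = 0"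
  shows "\<exists>t\<in>\<rat>. t^2 + b * t + e = 0"
proof (cases "\<exists>i<n. \<exists>j<n. a i j = 1")
  case False
  hence "\<And>i j. i < n \<Longrightarrow> j < n \<Longrightarrow> a i j = 0" using a01 by blast
  hence z: "\<And>i j. i < n \<Longrightarrow> j < n \<Longrightarrow> a i j = 0" .
  have "e = 0" using Z[OF n n] z[OF n n] z[OF n] by simp
  thus ?thesis by (intro bexI[of _ 0]) auto
next
  case True
  then obtain i j where i: "i < n" and j: "j < n" and aij: "a i j = 1" by auto
  have ij: "i \<noteq> j" using diag[OF i] aij by auto
  have nn: "a k l \<ge> 0" if "k < n" "l < n" for k l using a01[OF that] by auto
  have sq: "a k l * a l k = a k l" if "k < n" "l < n" for k l using a01[OF that] sym[OF that] by auto
  have deg: "(\<Sum>l<n. a i l) = - e"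
  proof -
    have "(\<Sum>l<n. a i l * a l i) = (\<Sum>l<n. a i l)" by (rule sum.cong, insert sq i, auto)
    thus ?thesis using Z[OF i i] diag[OF i] by simp
  qed
  have claim: "a i l * a l j = a i l - (if l = j then 1 else 0)" if l: "l < n" for l
  proof (cases "l = j")
    case True thus ?thesis using diag[OF j] aij by simp
  next
    case lj: False
    show ?thesis
    proof (cases "a i l = 0")
      case True thus ?thesis using lj by simp
    next
      case False
      hence ail: "a i l = 1" using a01[OF i l] by auto
      have "a l j = 1"
      proof (rule ccontr)
        assume "a l j \<noteq> 1"
        hence alj: "a l j = 0" using a01[OF l j] by auto
        have "(\<Sum>m<n. a l m * a m j) = 0" using Z[OF l j] alj lj by simp
        moreover have "a l i * a i j \<le> (\<Sum>m<n. a l m * a m j)"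
          by (rule member_le_sum, insert i nn l j, auto intro: mult_nonneg_nonneg)
        moreover have "a l i * a i j = 1" using ail sym[OF i l] aij by simp
        ultimately show False by simp
      qed
      thus ?thesis using ail lj by simp
    qed
  qed
  have "(\<Sum>l<n. a i l * a l j) = (\<Sum>l<n. a i l - (if l = j then 1 else 0))"
    by (rule sum.cong, insert claim, auto)
  also have "\<dots> = (\<Sum>l<n. a i l) - 1" using j by (simp add: sum_subtractf)
  finally have "(\<Sum>l<n. a i l * a l j) = - e - 1" using deg by simp
  hence "1 - b + e = 0" using Z[OF i j] aij ij by simp
  thus ?thesis by (intro bexI[of _ "-1"]) (auto simp: power2_eq_square)
qed


lemma main_abstract:
  fixes Y :: "'v set" and ip :: "'v \<Rightarrow> 'v \<Rightarrow> real" and f :: "real \<Rightarrow> real"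
    and w :: "real \<Rightarrow> int" and s :: real and T :: "'m set"
    and \<Phi> :: "'v \<Rightarrow> 'm \<Rightarrow> real" and \<Psi> :: "'m \<Rightarrow> 'v \<Rightarrow> real"
  assumes finY: "finite Y" and finT: "finite T" and s0: "s \<noteq> 0"
    and fac: "\<And>x y. x \<in> Y \<Longrightarrow> y \<in> Y \<Longrightarrow> f (ip x y) = (\<Sum>\<tau>\<in>T. \<Phi> x \<tau> * \<Psi> \<tau> y)"
    and dg: "\<And>x. x \<in> Y \<Longrightarrow> ip x x = 1"
    and off: "\<And>x y. x \<in> Y \<Longrightarrow> y \<in> Y \<Longrightarrow> x \<noteq> y \<Longrightarrow> f (ip x y) = s * of_int (w (ip x y))"
    and big: "2 * card T \<le> card Y" and Yne: "Y \<noteq> {}"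
    and eqc: "2 * card T = card Y \<Longrightarrow> (\<forall>x\<in>Y. \<forall>y\<in>Y. x \<noteq> y \<longrightarrow> (w (ip x y) = 0 \<or> w (ip x y) = 1) \<and> w (ip x y) = w (ip y x))"
  shows "- f 1 / s \<in> \<int>"
proof -
  define N where "N = card Y"
  define D where "D = card T"
  define \<mu> where "\<mu> = - f 1 / s"
  obtain ys where ys: "bij_betw ys {0..<N} Y" using ex_bij_betw_nat_finite[OF finY] unfolding N_def by auto
  obtain ts where ts: "bij_betw ts {0..<D} T" using ex_bij_betw_nat_finite[OF finT] unfolding D_def by auto
  have ysY: "ys i \<in> Y" if "i < N" for i using ys that unfolding bij_betw_def by auto
  have ysinj: "ys i \<noteq> ys j" if "i < N" "j < N" "i \<noteq> j" for i j
    using ys that unfolding bij_betw_def inj_on_def by auto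
  have N0: "N > 0" using finY Yne unfolding N_def by (simp add: card_gt_0_iff)
  define A :: "int mat" where "A = mat N N (\<lambda>(i,j). if i = j then 0 else w (ip (ys i) (ys j)))"
  have A: "A \<in> carrier_mat N N" unfolding A_def by simp
  define Ac :: "complex mat" where "Ac = map_mat of_int A"
  have Ac: "Ac \<in> carrier_mat N N" unfolding Ac_def using A by simp
  define P :: "complex mat" where "P = mat N D (\<lambda>(i,k). complex_of_real (\<Phi> (ys i) (ts k) / s))"
  define Q :: "complex mat" where "Q = mat D N (\<lambda>(k,j). complex_of_real (\<Psi> (ts k) (ys j)))"
  have P: "P \<in> carrier_mat N D" and Q: "Q \<in> carrier_mat D N" unfolding P_def Q_def by auto
  have fsum: "(\<Sum>k<D. \<Phi> x (ts k) * \<Psi> (ts k) y) = f (ip x y)" if "x \<in> Y" "y \<in> Y" for x y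
  proof -
    have "(\<Sum>k<D. \<Phi> x (ts k) * \<Psi> (ts k) y) = (\<Sum>\<tau>\<in>T. \<Phi> x \<tau> * \<Psi> \<tau> y)"
      using sum.reindex_bij_betw[OF ts, of "\<lambda>\<tau>. \<Phi> x \<tau> * \<Psi> \<tau> y"] by (simp add: lessThan_atLeast0)
    also have "\<dots> = f (ip x y)" using fac[OF that] by simp
    finally show ?thesis .
  qed
  have CM: "char_matrix Ac (complex_of_real \<mu>) = P * Q"
  proof (rule eq_matI)
    fix i j assume i: "i < dim_row (P * Q)" and j: "j < dim_col (P * Q)"
    hence i: "i < N" and j: "j < N" using P Q by auto
    have "(P * Q) $$ (i,j) = (\<Sum>k<D. P $$ (i,k) * Q $$ (k,j))"
      using P Q i j by (simp add: scalar_prod_def lessThan_atLeast0)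
    also have "\<dots> = (\<Sum>k<D. complex_of_real (\<Phi> (ys i) (ts k) * \<Psi> (ts k) (ys j) / s))"
      unfolding P_def Q_def using i j by (intro sum.cong) auto
    also have "\<dots> = complex_of_real ((\<Sum>k<D. \<Phi> (ys i) (ts k) * \<Psi> (ts k) (ys j)) / s)"
      by (simp add: sum_divide_distrib)
    also have "\<dots> = complex_of_real (f (ip (ys i) (ys j)) / s)" using fsum ysY i j by simp
    finally have rhs: "(P * Q) $$ (i,j) = complex_of_real (f (ip (ys i) (ys j)) / s)" .
    show "char_matrix Ac (complex_of_real \<mu>) $$ (i,j) = (P * Q) $$ (i,j)"
    proof (cases "i = j")
      case True
      thus ?thesis unfolding rhs char_matrix_def Ac_def A_def \<mu>_def using i j dg[OF ysY[OF i]]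
        by simp
    next
      case False
      have "f (ip (ys i) (ys j)) / s = of_int (w (ip (ys i) (ys j)))"
        using off[OF ysY[OF i] ysY[OF j] ysinj[OF i j False]] s0 by simp
      thus ?thesis unfolding rhs char_matrix_def Ac_def A_def using i j False by simp
    qed
  qed (insert P Q Ac, auto simp: char_matrix_def)
  have kd: "kernel_dim (char_matrix Ac (complex_of_real \<mu>)) \<ge> N - D"
    unfolding CM by (rule kernel_dim_mult_ge[OF P Q])
  have cpA: "char_poly Ac = map_poly of_int (char_poly A)"
    unfolding Ac_def by (rule of_int_hom.char_poly_hom[OF A])
  have ord: "Polynomial.order (complex_of_real \<mu>) (map_poly of_int (char_poly A)) \<ge> N - D"
    using geo_le_alg[OF Ac, of "complex_of_real \<mu>"] kd cpA by simp
  have degA: "degree (char_poly A) = N" and lcA: "coeff (char_poly A) N = 1"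
    using degree_monic_char_poly[OF A] by auto
  have c0: "char_poly A \<noteq> 0" using lcA by auto
  have DN: "2 * D \<le> N" using big unfolding N_def D_def .
  have m0: "N - D > 0" using DN N0 by linarith
  have degle: "degree (char_poly A) \<le> 2 * (N - D)" using degA DN by linarith
  have rat: "\<mu> \<in> \<rat>"
  proof -
    note am = alg_main[OF c0 ord m0 degle]
    show ?thesis
    proof (cases "\<mu> \<in> \<rat>")
      case False
      with am obtain b e where be: "b \<in> \<rat>" "e \<in> \<rat>" "\<mu>^2 + b * \<mu> + e = 0"
        and roots: "\<forall>z::complex. poly (map_poly of_int (char_poly A)) z = 0 \<longrightarrow> z^2 + of_real b * z + of_real e = 0"
        and dg2: "degree (char_poly A) = 2 * (N - D)" by blast
      have eqN: "2 * D = N" using dg2 degA DN by linarith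
      have eqw: "\<forall>x\<in>Y. \<forall>y\<in>Y. x \<noteq> y \<longrightarrow> (w (ip x y) = 0 \<or> w (ip x y) = 1) \<and> w (ip x y) = w (ip y x)"
        using eqc eqN unfolding N_def D_def by blast
      define Ar :: "real mat" where "Ar = map_mat of_int A"
      have Ar: "Ar \<in> carrier_mat N N" unfolding Ar_def using A by simp
      have AcAr: "map_mat complex_of_real Ar = Ac" unfolding Ar_def Ac_def by (rule eq_matI, auto)
      have Are: "Ar $$ (i,j) = (if i = j then 0 else of_int (w (ip (ys i) (ys j))))" if "i < N" "j < N" for i j
        unfolding Ar_def A_def using that by simp
      have symA: "Ar $$ (i,j) = Ar $$ (j,i)" if "i < N" "j < N" for i j
        using Are[OF that] Are[of j i] that eqw ysY ysinj by (cases "i = j") auto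
      have rootsA: "z^2 + of_real b * z + of_real e = 0" if "poly (char_poly (map_mat complex_of_real Ar)) z = 0" for z
        using roots that unfolding AcAr cpA by blast
      have "\<exists>t\<in>\<rat>. t^2 + b * t + e = 0"
      proof (rule graph_root[of N "\<lambda>i j. Ar $$ (i,j)"])
        show "0 < N" by (rule N0)
        fix i j assume i: "i < N" and j: "j < N"
        show "Ar $$ (i,j) = 0 \<or> Ar $$ (i,j) = 1"
          using Are[OF i j] eqw ysY[OF i] ysY[OF j] ysinj[OF i j] by (cases "i = j") auto
        show "Ar $$ (i,j) = Ar $$ (j,i)" by (rule symA[OF i j])
        show "(\<Sum>l<N. Ar $$ (i,l) * Ar $$ (l,j)) + b * Ar $$ (i,j) + (if i = j then e else 0) = 0"
          apply (rule quad_zero[where b=b and e=e and A=Ar and n=N])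
          using Ar symA rootsA i j by auto
      next
        fix i assume "i < N" thus "Ar $$ (i,i) = 0" using Are by simp
      qed
      then obtain t where t: "t \<in> \<rat>" "t^2 + b * t + e = 0" by auto
      have "(\<mu> - t) * (\<mu> + t + b) = 0" using be(3) t(2) by (simp add: algebra_simps power2_eq_square)
      hence "\<mu> = t \<or> \<mu> = - t - b" by auto
      thus ?thesis using t(1) be(1) by auto
    qed
  qed
  have "algebraic_int \<mu>"
  proof -
    have "poly (map_poly of_int (char_poly A)) (complex_of_real \<mu>) = 0"
      using ord m0 order_root by fastforce
    moreover have "map_poly (of_int :: int \<Rightarrow> complex) (char_poly A) = map_poly complex_of_real (map_poly of_int (char_poly A))"
      by (subst map_poly_map_poly, auto simp: o_def)
    ultimately have "complex_of_real (poly (map_poly of_int (char_poly A)) \<mu>) = 0"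
      by (simp add: of_real_hom.poly_map_poly)
    hence "poly (map_poly of_int (char_poly A)) \<mu> = 0" by simp
    moreover have "lead_coeff (char_poly A) = 1" using degA lcA by simp
    ultimately show ?thesis unfolding algebraic_int_altdef_ipoly by blast
  qed
  from rational_algebraic_int_is_int[OF this rat] show ?thesis unfolding \<mu>_def .
qed


no_notation Matrix.scalar_prod (infix "\<bullet>" 70)

lemma group_sum:
  fixes c :: "'p \<Rightarrow> real" and g :: "'m \<Rightarrow> real"
  assumes "finite S" "finite T" "h ` S \<subseteq> T"
  shows "(\<Sum>p\<in>S. c p * g (h p)) = (\<Sum>M\<in>T. (\<Sum>p\<in>{p\<in>S. h p = M}. c p) * g M)"
proof -
  have "(\<Sum>p\<in>S. c p * g (h p)) = (\<Sum>M\<in>T. \<Sum>p\<in>{p\<in>S. h p = M}. c p * g (h p))"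
    by (rule sum.group[symmetric], insert assms, auto)
  also have "\<dots> = (\<Sum>M\<in>T. (\<Sum>p\<in>{p\<in>S. h p = M}. c p) * g M)"
    by (rule sum.cong[OF refl], simp add: sum_distrib_right)
  finally show ?thesis .
qed

definition mono :: "'n multiset \<Rightarrow> real^'n \<Rightarrow> real" where
  "mono M y = (\<Prod>i\<in>#M. y $ i)"

definition phi2 :: "real \<Rightarrow> real^'n \<Rightarrow> 'n multiset \<Rightarrow> real" where
  "phi2 a x M = (\<Sum>p\<in>{p::'n\<times>'n. {#fst p, snd p#} = M}. x $ fst p * x $ snd p - (if fst p = snd p then a else 0))"

definition phi3 :: "real \<Rightarrow> real^'n \<Rightarrow> 'n multiset \<Rightarrow> real" where
  "phi3 a x M = (\<Sum>p\<in>{p::'n\<times>'n\<times>'n. {#fst p, fst (snd p), snd (snd p)#} = M}.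
      x $ fst p * x $ fst (snd p) * x $ snd (snd p) - (if fst (snd p) = snd (snd p) then a * x $ fst p else 0))"

lemma inner_sum: "inner (x::real^'n) y = (\<Sum>i\<in>UNIV. x $ i * y $ i)"
  by (simp add: inner_vec_def)

lemma cube_sum: "(\<Sum>i\<in>S. u i)^3 = (\<Sum>i\<in>S. \<Sum>j\<in>S. \<Sum>l\<in>S. u i * u j * (u l::real))"
proof -
  have "(\<Sum>i\<in>S. u i)^3 = (\<Sum>i\<in>S. u i) * ((\<Sum>i\<in>S. u i) * (\<Sum>i\<in>S. u i))"
    by (simp add: power3_eq_cube mult.assoc)
  also have "(\<Sum>i\<in>S. u i) * (\<Sum>i\<in>S. u i) = (\<Sum>j\<in>S. \<Sum>l\<in>S. u j * u l)" by (rule sum_product)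
  also have "(\<Sum>i\<in>S. u i) * (\<Sum>j\<in>S. \<Sum>l\<in>S. u j * u l) = (\<Sum>i\<in>S. \<Sum>j\<in>S. u i * (\<Sum>l\<in>S. u j * u l))"
    by (rule sum_product)
  also have "\<dots> = (\<Sum>i\<in>S. \<Sum>j\<in>S. \<Sum>l\<in>S. u i * u j * (u l::real))"
    by (simp add: sum_distrib_left mult.assoc)
  finally show ?thesis .
qed

lemma ifm: "(if P then (a::real) else 0) * t = (if P then a * t else 0)" by simp

lemma feat2:
  fixes x y :: "real^'n" and a :: real
  assumes yy: "inner y y = 1"
  shows "(inner x y)^2 - a = (\<Sum>M\<in>multisets_of_size (UNIV::'n set) 2. phi2 a x M * mono M y)"
proof -
  let ?c = "\<lambda>p::'n\<times>'n. x $ fst p * x $ snd p - (if fst p = snd p then a else 0)"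
  have e1: "(inner x y)^2 = (\<Sum>i\<in>UNIV. \<Sum>j\<in>UNIV. x $ i * x $ j * (y $ i * y $ j))"
    unfolding inner_sum power2_eq_square sum_product by (simp add: algebra_simps)
  have e2: "(\<Sum>i\<in>UNIV. \<Sum>j\<in>UNIV. (if i = j then a else 0) * (y $ i * y $ j)) = a"
  proof -
    have "a = a * inner y y" using yy by simp
    also have "\<dots> = (\<Sum>i\<in>UNIV. a * (y $ i * y $ i))" unfolding inner_sum by (simp add: sum_distrib_left)
    also have "\<dots> = (\<Sum>i\<in>UNIV. \<Sum>j\<in>UNIV. (if i = j then a else 0) * (y $ i * y $ j))"
      by (rule sum.cong[OF refl]) (simp add: ifm)
    finally show ?thesis by simp
  qed
  have e3: "(\<Sum>i\<in>UNIV. \<Sum>j\<in>UNIV. ?c (i,j) * (y $ i * y $ j)) = 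
     (\<Sum>i\<in>UNIV. \<Sum>j\<in>UNIV. x $ i * x $ j * (y $ i * y $ j)) - 
     (\<Sum>i\<in>UNIV. \<Sum>j\<in>UNIV. (if i = j then a else 0) * (y $ i * y $ j))"
    by (simp add: sum_subtractf left_diff_distrib)
  have "(inner x y)^2 - a = (\<Sum>i\<in>UNIV. \<Sum>j\<in>UNIV. ?c (i,j) * (y $ i * y $ j))"
    unfolding e3 e1 e2 by (rule refl)
  also have "\<dots> = (\<Sum>p\<in>UNIV. ?c p * mono {#fst p, snd p#} y)"
    unfolding UNIV_Times_UNIV[symmetric] sum.cartesian_product mono_def by (simp add: case_prod_beta)
  also have "\<dots> = (\<Sum>M\<in>multisets_of_size (UNIV::'n set) 2. (\<Sum>p\<in>{p\<in>UNIV. {#fst p, snd p#} = M}. ?c p) * mono M y)"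
    by (rule group_sum[OF _ finite_multisets_of_size]) (auto simp: multisets_of_size_def)
  also have "\<dots> = (\<Sum>M\<in>multisets_of_size (UNIV::'n set) 2. phi2 a x M * mono M y)"
    unfolding phi2_def by simp
  finally show ?thesis .
qed

lemma feat3:
  fixes x y :: "real^'n" and a :: real
  assumes yy: "inner y y = 1"
  shows "(inner x y)^3 - a * inner x y = (\<Sum>M\<in>multisets_of_size (UNIV::'n set) 3. phi3 a x M * mono M y)"
proof -
  let ?c = "\<lambda>p::'n\<times>'n\<times>'n. x $ fst p * x $ fst (snd p) * x $ snd (snd p) - (if fst (snd p) = snd (snd p) then a * x $ fst p else 0)"
  have "(inner x y)^3 = (\<Sum>i\<in>UNIV. \<Sum>j\<in>UNIV. \<Sum>l\<in>UNIV. x $ i * x $ j * x $ l * (y $ i * y $ j * y $ l))"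
    unfolding inner_sum cube_sum by (simp add: algebra_simps)
  moreover have "a * inner x y = (\<Sum>i\<in>UNIV. \<Sum>j\<in>UNIV. \<Sum>l\<in>UNIV. (if j = l then a * x $ i else 0) * (y $ i * y $ j * y $ l))"
  proof -
    have "a * inner x y = a * inner x y * inner y y" using yy by simp
    also have "\<dots> = (\<Sum>i\<in>UNIV. a * (x $ i * y $ i)) * (\<Sum>j\<in>UNIV. y $ j * y $ j)"
      unfolding inner_sum by (simp add: sum_distrib_left)
    also have "\<dots> = (\<Sum>i\<in>UNIV. \<Sum>j\<in>UNIV. a * (x $ i * y $ i) * (y $ j * y $ j))"
      by (rule sum_product)
    also have "\<dots> = (\<Sum>i\<in>UNIV. \<Sum>j\<in>UNIV. a * x $ i * y $ i * (y $ j * y $ j))"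
      by (simp add: mult.assoc)
    also have "\<dots> = (\<Sum>i\<in>UNIV. \<Sum>j\<in>UNIV. \<Sum>l\<in>UNIV. (if j = l then a * x $ i else 0) * (y $ i * y $ j * y $ l))"
      by (intro sum.cong refl) (simp add: ifm mult.assoc)
    finally show ?thesis .
  qed
  ultimately have "(inner x y)^3 - a * inner x y = (\<Sum>i\<in>UNIV. \<Sum>j\<in>UNIV. \<Sum>l\<in>UNIV. ?c (i,j,l) * (y $ i * y $ j * y $ l))"
    by (simp add: sum_subtractf[symmetric] algebra_simps cong: if_cong)
  also have "\<dots> = (\<Sum>p\<in>UNIV. ?c p * mono {#fst p, fst (snd p), snd (snd p)#} y)"
    unfolding UNIV_Times_UNIV[symmetric] sum.cartesian_product mono_def by (simp add: case_prod_beta algebra_simps cong: if_cong)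
  also have "\<dots> = (\<Sum>M\<in>multisets_of_size (UNIV::'n set) 3. (\<Sum>p\<in>{p\<in>UNIV. {#fst p, fst (snd p), snd (snd p)#} = M}. ?c p) * mono M y)"
    by (rule group_sum[OF _ finite_multisets_of_size]) (auto simp: multisets_of_size_def)
  also have "\<dots> = (\<Sum>M\<in>multisets_of_size (UNIV::'n set) 3. phi3 a x M * mono M y)"
    unfolding phi3_def by simp
  finally show ?thesis .
qed


lemma unit_inner: "y \<in> sphere (0::real^'n) 1 \<Longrightarrow> inner y y = 1"
  by (simp add: dot_square_norm)

theorem lemma6p4:
  fixes Y :: "(real ^ 'n) set" and \<alpha> \<beta> :: real
  assumes "CARD('n) \<ge> 2"
    and "finite Y"
    and "Y \<subseteq> sphere 0 1"
    and "inner_products Y = {\<alpha>, -\<alpha>, \<beta>, -\<beta>}"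
    and "0 < \<beta>" and "\<beta> < \<alpha>" and "\<alpha> < 1"
  shows "(real (card Y) \<ge> 2 * real (CARD('n) + 1 choose 2) \<longrightarrow>
            (1 - \<alpha>^2) / (\<beta>^2 - \<alpha>^2) \<in> \<int> \<and> (1 - \<beta>^2) / (\<alpha>^2 - \<beta>^2) \<in> \<int>)
       \<and> (real (card Y) \<ge> 2 * real (CARD('n) + 2 choose 3) + 1 \<longrightarrow>
            (1 - \<alpha>^2) / (\<beta> * (\<beta>^2 - \<alpha>^2)) \<in> \<int> \<and> (1 - \<beta>^2) / (\<alpha> * (\<alpha>^2 - \<beta>^2)) \<in> \<int>)"
proof -
  note n2 = assms(1) and finY = assms(2) and sph = assms(3) and ipY = assms(4)
    and b0 = assms(5) and ba = assms(6) and a1 = assms(7)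
  have uY: "inner y y = 1" if "y \<in> Y" for y using unit_inner sph that by blast
  have ipv: "inner x y = \<alpha> \<or> inner x y = -\<alpha> \<or> inner x y = \<beta> \<or> inner x y = -\<beta>"
    if "x \<in> Y" "y \<in> Y" "x \<noteq> y" for x y
  proof -
    have "inner x y \<in> inner_products Y" unfolding inner_products_def using that by blast
    thus ?thesis using ipY by auto
  qed
  have ne: "\<alpha> \<noteq> \<beta>" "\<alpha> \<noteq> -\<beta>" "-\<alpha> \<noteq> \<beta>" "-\<alpha> \<noteq> -\<beta>" "\<beta> \<noteq> -\<beta>" "\<alpha> \<noteq> -\<alpha>"
    using b0 ba by auto
  have a0: "\<alpha> > 0" using b0 ba by simp
  have s1: "\<beta>^2 - \<alpha>^2 \<noteq> 0" "\<alpha>^2 - \<beta>^2 \<noteq> 0"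
  proof -
    have "\<beta>^2 < \<alpha>^2" using b0 ba by (simp add: power_strict_mono)
    thus "\<beta>^2 - \<alpha>^2 \<noteq> 0" "\<alpha>^2 - \<beta>^2 \<noteq> 0" by auto
  qed
  have s2: "\<beta> * (\<beta>^2 - \<alpha>^2) \<noteq> 0" "\<alpha> * (\<alpha>^2 - \<beta>^2) \<noteq> 0" using s1 b0 a0 by auto
  define T2 where "T2 = multisets_of_size (UNIV::'n set) 2"
  define T3 where "T3 = multisets_of_size (UNIV::'n set) 3"
  have fT2: "finite T2" and fT3: "finite T3" unfolding T2_def T3_def by (auto intro: finite_multisets_of_size)
  have cT2: "card T2 = CARD('n) + 1 choose 2" unfolding T2_def by (simp add: card_multisets_of_size)
  have cT3: "card T3 = CARD('n) + 2 choose 3" unfolding T3_def by (simp add: card_multisets_of_size)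
  have sym: "inner x y = inner y x" for x y :: "real^'n" by (rule inner_commute)
  have part1: "(1 - \<alpha>^2) / (\<beta>^2 - \<alpha>^2) \<in> \<int> \<and> (1 - \<beta>^2) / (\<alpha>^2 - \<beta>^2) \<in> \<int>"
    if h: "real (card Y) \<ge> 2 * real (CARD('n) + 1 choose 2)"
  proof -
    have big: "2 * card T2 \<le> card Y" using h cT2 by linarith
    have "CARD('n) + 1 choose 2 > 0" using n2 by simp
    hence Yne: "Y \<noteq> {}" using big cT2 by auto
    have k1: "- ((1::real)^2 - \<alpha>^2) / (\<beta>^2 - \<alpha>^2) \<in> \<int>"
    proof (rule main_abstract[where Y = Y and ip = inner and f = "\<lambda>t. t^2 - \<alpha>^2"
          and w = "\<lambda>t. if t = \<beta> \<or> t = -\<beta> then 1 else 0" and s = "\<beta>^2 - \<alpha>^2" and T = T2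
          and \<Phi> = "phi2 (\<alpha>^2)" and \<Psi> = mono])
      show "finite Y" "finite T2" "\<beta>^2 - \<alpha>^2 \<noteq> 0" "2 * card T2 \<le> card Y" "Y \<noteq> {}"
        using finY fT2 s1 big Yne by auto
      fix x y assume x: "x \<in> Y" and y: "y \<in> Y"
      show "(inner x y)^2 - \<alpha>^2 = (\<Sum>\<tau>\<in>T2. phi2 (\<alpha>^2) x \<tau> * mono \<tau> y)"
        unfolding T2_def by (rule feat2[OF uY[OF y]])
      assume xy: "x \<noteq> y"
      show "(inner x y)^2 - \<alpha>^2 = (\<beta>^2 - \<alpha>^2) * of_int (if inner x y = \<beta> \<or> inner x y = -\<beta> then 1 else 0)"
        using ipv[OF x y xy] ne by auto
    next
      fix x assume "x \<in> Y" thus "inner x x = 1" by (rule uY)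
    next
      show "\<forall>x\<in>Y. \<forall>y\<in>Y. x \<noteq> y \<longrightarrow> ((if inner x y = \<beta> \<or> inner x y = -\<beta> then 1 else 0) = (0::int) \<or>
         (if inner x y = \<beta> \<or> inner x y = -\<beta> then 1 else 0) = (1::int)) \<and>
         (if inner x y = \<beta> \<or> inner x y = -\<beta> then 1 else 0) = (if inner y x = \<beta> \<or> inner y x = -\<beta> then 1 else (0::int))"
        by (auto simp: sym)
    qed
    have k2: "- ((1::real)^2 - \<beta>^2) / (\<alpha>^2 - \<beta>^2) \<in> \<int>"
    proof (rule main_abstract[where Y = Y and ip = inner and f = "\<lambda>t. t^2 - \<beta>^2"
          and w = "\<lambda>t. if t = \<alpha> \<or> t = -\<alpha> then 1 else 0" and s = "\<alpha>^2 - \<beta>^2" and T = T2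
          and \<Phi> = "phi2 (\<beta>^2)" and \<Psi> = mono])
      show "finite Y" "finite T2" "\<alpha>^2 - \<beta>^2 \<noteq> 0" "2 * card T2 \<le> card Y" "Y \<noteq> {}"
        using finY fT2 s1 big Yne by auto
      fix x y assume x: "x \<in> Y" and y: "y \<in> Y"
      show "(inner x y)^2 - \<beta>^2 = (\<Sum>\<tau>\<in>T2. phi2 (\<beta>^2) x \<tau> * mono \<tau> y)"
        unfolding T2_def by (rule feat2[OF uY[OF y]])
      assume xy: "x \<noteq> y"
      show "(inner x y)^2 - \<beta>^2 = (\<alpha>^2 - \<beta>^2) * of_int (if inner x y = \<alpha> \<or> inner x y = -\<alpha> then 1 else 0)"
        using ipv[OF x y xy] ne by auto
    next
      fix x assume "x \<in> Y" thus "inner x x = 1" by (rule uY)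
    next
      show "\<forall>x\<in>Y. \<forall>y\<in>Y. x \<noteq> y \<longrightarrow> ((if inner x y = \<alpha> \<or> inner x y = -\<alpha> then 1 else 0) = (0::int) \<or>
         (if inner x y = \<alpha> \<or> inner x y = -\<alpha> then 1 else 0) = (1::int)) \<and>
         (if inner x y = \<alpha> \<or> inner x y = -\<alpha> then 1 else 0) = (if inner y x = \<alpha> \<or> inner y x = -\<alpha> then 1 else (0::int))"
        by (auto simp: sym)
    qed
    have "(1 - \<alpha>^2) / (\<beta>^2 - \<alpha>^2) = - (- ((1::real)^2 - \<alpha>^2) / (\<beta>^2 - \<alpha>^2))" using s1 by (simp add: field_simps)
    moreover have "(1 - \<beta>^2) / (\<alpha>^2 - \<beta>^2) = - (- ((1::real)^2 - \<beta>^2) / (\<alpha>^2 - \<beta>^2))" using s1 by (simp add: field_simps)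
    ultimately show ?thesis using k1 k2 by (metis Ints_minus)
  qed
  have part2: "(1 - \<alpha>^2) / (\<beta> * (\<beta>^2 - \<alpha>^2)) \<in> \<int> \<and> (1 - \<beta>^2) / (\<alpha> * (\<alpha>^2 - \<beta>^2)) \<in> \<int>"
    if h: "real (card Y) \<ge> 2 * real (CARD('n) + 2 choose 3) + 1"
  proof -
    have big: "2 * card T3 < card Y" using h cT3 by linarith
    hence Yne: "Y \<noteq> {}" by auto
    have k1: "- ((1::real)^3 - \<alpha>^2 * 1) / (\<beta> * (\<beta>^2 - \<alpha>^2)) \<in> \<int>"
    proof (rule main_abstract[where Y = Y and ip = inner and f = "\<lambda>t. t^3 - \<alpha>^2 * t"
          and w = "\<lambda>t. if t = \<beta> then 1 else if t = -\<beta> then -1 else 0" and s = "\<beta> * (\<beta>^2 - \<alpha>^2)" and T = T3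
          and \<Phi> = "phi3 (\<alpha>^2)" and \<Psi> = mono])
      show "finite Y" "finite T3" "\<beta> * (\<beta>^2 - \<alpha>^2) \<noteq> 0" "2 * card T3 \<le> card Y" "Y \<noteq> {}"
        using finY fT3 s2 big Yne by auto
      fix x y assume x: "x \<in> Y" and y: "y \<in> Y"
      show "(inner x y)^3 - \<alpha>^2 * inner x y = (\<Sum>\<tau>\<in>T3. phi3 (\<alpha>^2) x \<tau> * mono \<tau> y)"
        unfolding T3_def by (rule feat3[OF uY[OF y]])
      assume xy: "x \<noteq> y"
      show "(inner x y)^3 - \<alpha>^2 * inner x y = (\<beta> * (\<beta>^2 - \<alpha>^2)) * of_int (if inner x y = \<beta> then 1 else if inner x y = -\<beta> then -1 else 0)"
        using ipv[OF x y xy] ne by (auto simp: power2_eq_square power3_eq_cube algebra_simps)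
    next
      fix x assume "x \<in> Y" thus "inner x x = 1" by (rule uY)
    qed (use big in simp)
    have k2: "- ((1::real)^3 - \<beta>^2 * 1) / (\<alpha> * (\<alpha>^2 - \<beta>^2)) \<in> \<int>"
    proof (rule main_abstract[where Y = Y and ip = inner and f = "\<lambda>t. t^3 - \<beta>^2 * t"
          and w = "\<lambda>t. if t = \<alpha> then 1 else if t = -\<alpha> then -1 else 0" and s = "\<alpha> * (\<alpha>^2 - \<beta>^2)" and T = T3
          and \<Phi> = "phi3 (\<beta>^2)" and \<Psi> = mono])
      show "finite Y" "finite T3" "\<alpha> * (\<alpha>^2 - \<beta>^2) \<noteq> 0" "2 * card T3 \<le> card Y" "Y \<noteq> {}"
        using finY fT3 s2 big Yne by auto
      fix x y assume x: "x \<in> Y" and y: "y \<in> Y"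
      show "(inner x y)^3 - \<beta>^2 * inner x y = (\<Sum>\<tau>\<in>T3. phi3 (\<beta>^2) x \<tau> * mono \<tau> y)"
        unfolding T3_def by (rule feat3[OF uY[OF y]])
      assume xy: "x \<noteq> y"
      show "(inner x y)^3 - \<beta>^2 * inner x y = (\<alpha> * (\<alpha>^2 - \<beta>^2)) * of_int (if inner x y = \<alpha> then 1 else if inner x y = -\<alpha> then -1 else 0)"
        using ipv[OF x y xy] ne by (auto simp: power2_eq_square power3_eq_cube algebra_simps)
    next
      fix x assume "x \<in> Y" thus "inner x x = 1" by (rule uY)
    qed (use big in simp)
    have "(1 - \<alpha>^2) / (\<beta> * (\<beta>^2 - \<alpha>^2)) = - (- ((1::real)^3 - \<alpha>^2 * 1) / (\<beta> * (\<beta>^2 - \<alpha>^2)))" using s2 by (simp add: field_simps)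
    moreover have "(1 - \<beta>^2) / (\<alpha> * (\<alpha>^2 - \<beta>^2)) = - (- ((1::real)^3 - \<beta>^2 * 1) / (\<alpha> * (\<alpha>^2 - \<beta>^2)))" using s2 by (simp add: field_simps)
    ultimately show ?thesis using k1 k2 by (metis Ints_minus)
  qed
  show ?thesis using part1 part2 by blast
qed

end
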